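(* Suppose the difference-in-means estimator $\widehat\tau_{DIM}$ is computed from outcomes generated under a balanced $K$-cluster randomized design $\mathcal{D}(\mathcal{C})$, and the potential outcomes follow the linear model $Y_i(\mathbf{Z}) = \alpha_i + \beta_i Z_i + \gamma_i e_i(\mathbf{Z})$ with fixed real coefficients $\alpha_i,\beta_i,\gamma_i$. Then $$\tau - \mathbb{E}_{\mathbf{Z}\sim\mathcal{D}(\mathcal{C})}[\widehat\tau_{DIM}] = \frac{2}{N}\cdot\frac{K}{K-1}\sum_{i\in[N]}\sum_{j\notin\mathcal{C}(i)} \gamma_i \sum_{s\in[M]} \frac{w_{is}}{\sum_{s'\in[M]} w_{is'}}\,\frac{w_{js}}{\sum_{k\in[N]} w_{ks}}.$$ Moreover, fix real numbers $\Gamma_0\le\Gamma_1$, not both zero. Then, among all partitions $\mathcal{C}$ of $[N]$ into $K$ equally sized clusters (with $K$ and $K_T$ fixed), the set of minimizers of $\max_{\boldsymbol\gamma\in[\Gamma_0,\Gamma_1]^N}\left|\tau-\mathbb{E}_{\mathbf{Z}\sim\mathcal{D}(\mathcal{C})}[\widehat\tau_{DIM}]\right|$ equals the set of minimizers of $\mathcal{H}(\mathcal{C})$.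
   Context: Setting: $N$ experimental units $[N]$ and $M$ interference units $[M]$, with known weights $w_{is}\ge 0$ for $i\in[N]$, $s\in[M]$; assume $\sum_{s} w_{is}>0$ for every $i$ and $\sum_i w_{is}>0$ for every $s$. A treatment assignment is $\mathbf{Z}\in\{-1,1\}^N$ ($1$ = treatment, $-1$ = control). The dose of interference unit $s$ is $d_s=\frac{\sum_{i\in[N]} w_{is}Z_i}{\sum_{i\in[N]} w_{is}}$ and the exposure of experimental unit $i$ is $e_i=e_i(\mathbf{Z})=\frac{\sum_{s\in[M]} w_{is}d_s}{\sum_{s\in[M]} w_{is}}$. Balanced $K$-cluster randomized design: $K\ge 2$ divides $N$, $\mathcal{C}=\{C_1,\dots,C_K\}$ is a partition of $[N]$ into $K$ clusters of equal size $N/K$, $\mathcal{C}(i)$ denotes the cluster containing $i$, and $\mathcal{D}(\mathcal{C})$ is the distribution of $\mathbf{Z}$ obtained by choosing $K_T$ clusters uniformly at random (fixed integer $0<K_T<K$), setting $Z_i=1$ for all units in these clusters and $Z_i=-1$ otherwise; $K_C=K-K_T$. Let $N_T=NK_T/K$ and $N_C=N-N_T$ (numbers of treated and control units). The difference-in-means estimator is $\widehat\tau_{DIM}=\frac{1}{N_T}\sum_{i:Z_i=1}Y_i-\frac{1}{N_C}\sum_{i:Z_i=-1}Y_i$, where $Y_i=Y_i(\mathbf{Z})$ is the observed outcome. The average total treatment effect is $\tau=\frac1N\sum_{i\in[N]}\big(Y_i(\mathbf{1})-Y_i(-\mathbf{1})\big)$. The clustering objective is $\mathcal{H}(\mathcal{C})=\sum_{i\in[N]}\sum_{j\in[N]\setminus\mathcal{C}(i)}\sum_{s\in[M]}\frac{w_{is}}{\sum_{s'\in[M]}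 w_{is'}}\frac{w_{js}}{\sum_{k\in[N]} w_{ks}}$. *)

theory Defs
  imports "HOL-Probability.Probability"
begin

text \<open>Experimental units are 0..<N, interference units are 0..<M,
  weights w i s. Assignments are functions Z :: nat => real with values 1/-1.\<close>

definition dose :: "(nat \<Rightarrow> nat \<Rightarrow> real) \<Rightarrow> nat \<Rightarrow> nat \<Rightarrow> (nat \<Rightarrow> real) \<Rightarrow> real" where
  "dose w N s Z = (\<Sum>i<N. w i s * Z i) / (\<Sum>i<N. w i s)"

definition exposure :: "(nat \<Rightarrow> nat \<Rightarrow> real) \<Rightarrow> nat \<Rightarrow> nat \<Rightarrow> nat \<Rightarrow> (nat \<Rightarrow> real) \<Rightarrow> real" where
  "exposure w N M i Z = (\<Sum>s<M. w i s * dose w N s Z) / (\<Sum>s<M. w i s)"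

definition lin_outcome ::
  "(nat \<Rightarrow> nat \<Rightarrow> real) \<Rightarrow> nat \<Rightarrow> nat \<Rightarrow> (nat \<Rightarrow> real) \<Rightarrow> (nat \<Rightarrow> real) \<Rightarrow> (nat \<Rightarrow> real)
    \<Rightarrow> nat \<Rightarrow> (nat \<Rightarrow> real) \<Rightarrow> real" where
  "lin_outcome w N M \<alpha> \<beta> \<gamma> i Z = \<alpha> i + \<beta> i * Z i + \<gamma> i * exposure w N M i Z"

definition balanced_partition :: "nat \<Rightarrow> nat \<Rightarrow> nat set set \<Rightarrow> bool" where
  "balanced_partition N K C \<longleftrightarrow> partition_on {..<N} C \<and> card C = K \<and> (\<forall>c\<in>C. card c = N div K)"

definition cluster_of :: "nat set set \<Rightarrow> nat \<Rightarrow> nat set" where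
  "cluster_of C i = (THE c. c \<in> C \<and> i \<in> c)"

definition cluster_assign :: "nat set set \<Rightarrow> nat \<Rightarrow> real" where
  "cluster_assign T = (\<lambda>i. if i \<in> \<Union>T then 1 else -1)"

definition cluster_design :: "nat set set \<Rightarrow> nat \<Rightarrow> (nat \<Rightarrow> real) pmf" where
  "cluster_design C KT = map_pmf cluster_assign (pmf_of_set {T. T \<subseteq> C \<and> card T = KT})"

definition dim_estimator ::
  "nat \<Rightarrow> nat \<Rightarrow> nat \<Rightarrow> (nat \<Rightarrow> (nat \<Rightarrow> real) \<Rightarrow> real) \<Rightarrow> (nat \<Rightarrow> real) \<Rightarrow> real" where
  "dim_estimator N K KT Y Z =
     (let NT = real N * real KT / real K; NC = real N - NT in
      (1 / NT) * (\<Sum>i\<in>{i. i < N \<and> Z i = 1}. Y i Z) - (1 / NC) * (\<Sum>i\<in>{i. i < N \<and> Z i = -1}. Y i Z))"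

definition att :: "nat \<Rightarrow> (nat \<Rightarrow> (nat \<Rightarrow> real) \<Rightarrow> real) \<Rightarrow> real" where
  "att N Y = (1 / real N) * (\<Sum>i<N. Y i (\<lambda>_. 1) - Y i (\<lambda>_. -1))"

definition H_obj :: "(nat \<Rightarrow> nat \<Rightarrow> real) \<Rightarrow> nat \<Rightarrow> nat \<Rightarrow> nat set set \<Rightarrow> real" where
  "H_obj w N M C = (\<Sum>i<N. \<Sum>j\<in>{..<N} - cluster_of C i. \<Sum>s<M.
      (w i s / (\<Sum>s'<M. w i s')) * (w j s / (\<Sum>k<N. w k s)))"

end

theory Submission
  imports Defs
begin


lemma card_supsets:
  assumes "finite A" "F \<subseteq> A" "card F \<le> k"
  shows "card {B. B \<subseteq> A \<and> card B = k \<and> F \<subseteq> B} = (card A - card F) choose (k - card F)"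
proof -
  have fF: "finite F" using assms finite_subset by blast
  have "bij_betw (\<lambda>B. B - F) {B. B \<subseteq> A \<and> card B = k \<and> F \<subseteq> B} {B. B \<subseteq> A - F \<and> card B = k - card F}"
  proof (rule bij_betw_byWitness[where f'="\<lambda>B. B \<union> F"])
    show "\<forall>a\<in>{B. B \<subseteq> A \<and> card B = k \<and> F \<subseteq> B}. a - F \<union> F = a" by auto
    show "\<forall>a'\<in>{B. B \<subseteq> A - F \<and> card B = k - card F}. a' \<union> F - F = a'" by auto
    show "(\<lambda>B. B - F) ` {B. B \<subseteq> A \<and> card B = k \<and> F \<subseteq> B} \<subseteq> {B. B \<subseteq> A - F \<and> card B = k - card F}"
    proof safe
      fix B assume "B \<subseteq> A" "F \<subseteq> B"
      then show "card (B - F) = card B - card F" using fF assms(1)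
        by (meson card_Diff_subset finite_subset)
    qed auto
    show "(\<lambda>B. B \<union> F) ` {B. B \<subseteq> A - F \<and> card B = k - card F} \<subseteq> {B. B \<subseteq> A \<and> card B = k \<and> F \<subseteq> B}"
    proof safe
      fix B assume "B \<subseteq> A - F" "card B = k - card F"
      moreover have "finite B" using \<open>B \<subseteq> A - F\<close> assms(1) finite_subset by blast
      ultimately show "card (B \<union> F) = k" using fF assms(3)
        by (subst card_Un_disjoint) auto
    qed (use assms in auto)
  qed
  then have "card {B. B \<subseteq> A \<and> card B = k \<and> F \<subseteq> B} = card {B. B \<subseteq> A - F \<and> card B = k - card F}"
    by (rule bij_betw_same_card)
  also have "\<dots> = card (A - F) choose (k - card F)" using assms by (simp add: n_subsets)
  also have "card (A - F) = card A - card F" using assms fF by (simp add: card_Diff_subset)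
  finally show ?thesis .
qed

lemma q1:
  assumes "finite C" "card C = K" "c \<in> C" "0 < KT" "KT \<le> K"
  shows "real (card {T. T \<subseteq> C \<and> card T = KT \<and> c \<in> T}) / real (K choose KT) = real KT / real K"
proof -
  have "card {T. T \<subseteq> C \<and> card T = KT \<and> c \<in> T} = card {T. T \<subseteq> C \<and> card T = KT \<and> {c} \<subseteq> T}" by simp
  also have "\<dots> = (K - 1) choose (KT - 1)" using assms by (subst card_supsets) auto
  finally have e: "card {T. T \<subseteq> C \<and> card T = KT \<and> c \<in> T} = (K - 1) choose (KT - 1)" .
  have "KT * (K choose KT) = K * ((K - 1) choose (KT - 1))" using assms times_binomial_minus1_eq by blast
  then have "real KT * real (K choose KT) = real K * real ((K - 1) choose (KT - 1))" by (metis of_nat_mult)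
  moreover have "(K choose KT) > 0" using assms by simp
  ultimately show ?thesis unfolding e using assms by (simp add: field_simps)
qed

lemma q2:
  assumes "finite C" "card C = K" "c \<in> C" "c' \<in> C" "c \<noteq> c'" "0 < KT" "KT \<le> K"
  shows "real (card {T. T \<subseteq> C \<and> card T = KT \<and> c \<in> T \<and> c' \<in> T}) / real (K choose KT)
     = real KT * (real KT - 1) / (real K * (real K - 1))"
proof (cases "KT = 1")
  case True
  { fix T assume "T \<subseteq> C" "card T = KT" "c \<in> T" "c' \<in> T"
    then have "card {c, c'} \<le> card T" using assms(1) by (meson card_mono empty_subsetI finite_subset insert_subset)
    then have False using True assms \<open>card T = KT\<close> by simp }
  then have "{T. T \<subseteq> C \<and> card T = KT \<and> c \<in> T \<and> c' \<in> T} = {}" by blast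
  then show ?thesis using True by (simp only: card.empty of_nat_0 div_0) simp
next
  case False
  have "card {T. T \<subseteq> C \<and> card T = KT \<and> c \<in> T \<and> c' \<in> T} = card {T. T \<subseteq> C \<and> card T = KT \<and> {c,c'} \<subseteq> T}" by simp
  also have "\<dots> = (K - 2) choose (KT - 2)" using assms False by (subst card_supsets) (auto simp: numeral_2_eq_2)
  finally have e: "card {T. T \<subseteq> C \<and> card T = KT \<and> c \<in> T \<and> c' \<in> T} = (K - 2) choose (KT - 2)" .
  have K2: "K \<ge> 2" using assms False by linarith
  have "KT * (K choose KT) = K * ((K - 1) choose (KT - 1))" using assms times_binomial_minus1_eq by blast
  moreover have "(KT - 1) * ((K - 1) choose (KT - 1)) = (K - 1) * ((K - 1 - 1) choose (KT - 1 - 1))"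
    using assms False times_binomial_minus1_eq[of "KT - 1" "K - 1"] by simp
  ultimately have "KT * (KT - 1) * (K choose KT) = K * (K - 1) * ((K - 2) choose (KT - 2))"
  proof -
    assume h1: "KT * (K choose KT) = K * ((K - 1) choose (KT - 1))"
      and h2: "(KT - 1) * ((K - 1) choose (KT - 1)) = (K - 1) * ((K - 1 - 1) choose (KT - 1 - 1))"
    have "KT * (KT - 1) * (K choose KT) = (KT - 1) * (KT * (K choose KT))" by (simp add: ac_simps)
    also have "\<dots> = K * ((KT - 1) * ((K - 1) choose (KT - 1)))" using h1 by (simp add: ac_simps)
    also have "\<dots> = K * (K - 1) * ((K - 2) choose (KT - 2))" using h2 by (simp add: numeral_2_eq_2 ac_simps)
    finally show ?thesis .
  qed
  then have "real (KT * (KT - 1) * (K choose KT)) = real (K * (K - 1) * ((K - 2) choose (KT - 2)))"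
    by (simp only:)
  then have "real KT * (real KT - 1) * real (K choose KT) = real K * (real K - 1) * real ((K - 2) choose (KT - 2))"
    using K2 assms by (simp add: of_nat_diff)
  moreover have "(K choose KT) > 0" using assms by simp
  ultimately show ?thesis unfolding e using assms K2 by (simp add: field_simps)
qed

lemma sum_ind:
  assumes "finite S"
  shows "(\<Sum>T\<in>S. if P T then (1::real) else 0) = real (card {T\<in>S. P T})"
  using assms by (simp add: sum.If_cases Int_def)

lemma bp_basic:
  assumes "balanced_partition N K C"
  shows "finite C" "card C = K" "\<And>c. c \<in> C \<Longrightarrow> c \<subseteq> {..<N}"
    "\<And>i. i < N \<Longrightarrow> cluster_of C i \<in> C \<and> i \<in> cluster_of C i"
    "\<And>i c. c \<in> C \<Longrightarrow> i \<in> c \<Longrightarrow> cluster_of C i = c"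
proof -
  have P: "partition_on {..<N} C" using assms unfolding balanced_partition_def by blast
  show "finite C" using P finite_elements by blast
  show "card C = K" using assms unfolding balanced_partition_def by blast
  show "\<And>c. c \<in> C \<Longrightarrow> c \<subseteq> {..<N}" using partition_onD1[OF P] by blast
  have uniq: "\<And>i c. c \<in> C \<Longrightarrow> i \<in> c \<Longrightarrow> cluster_of C i = c"
  proof -
    fix i c assume "c \<in> C" "i \<in> c"
    show "cluster_of C i = c" unfolding cluster_of_def
    proof (rule the_equality)
      show "c \<in> C \<and> i \<in> c" using \<open>c \<in> C\<close> \<open>i \<in> c\<close> by blast
      fix d assume "d \<in> C \<and> i \<in> d"
      then show "d = c" using disjointD[OF partition_onD2[OF P]] \<open>c \<in> C\<close> \<open>i \<in> c\<close> by blast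
    qed
  qed
  then show "\<And>i c. c \<in> C \<Longrightarrow> i \<in> c \<Longrightarrow> cluster_of C i = c" .
  fix i assume "i < N"
  then obtain c where "c \<in> C" "i \<in> c" using partition_onD1[OF P] by blast
  then show "cluster_of C i \<in> C \<and> i \<in> cluster_of C i" using uniq by simp
qed

lemma ca_eq:
  assumes "balanced_partition N K C" "T \<subseteq> C" "i < N"
  shows "cluster_assign T i = (if cluster_of C i \<in> T then 1 else -1)"
proof -
  have "i \<in> \<Union>T \<longleftrightarrow> cluster_of C i \<in> T"
    using bp_basic(4,5)[OF assms(1)] assms(2,3) by blast
  then show ?thesis unfolding cluster_assign_def by simp
qed

lemma s1:
  assumes "balanced_partition N K C" "i < N" "0 < KT" "KT \<le> K"
  shows "(\<Sum>T\<in>{T. T \<subseteq> C \<and> card T = KT}. cluster_assign T i)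
      = real (K choose KT) * (2 * real KT / real K - 1)"
proof -
  note B = bp_basic[OF assms(1)]
  let ?S = "{T. T \<subseteq> C \<and> card T = KT}"
  let ?c = "cluster_of C i"
  have fS: "finite ?S" using B(1) by simp
  have cS: "card ?S = K choose KT" using B(1,2) n_subsets by blast
  have "(\<Sum>T\<in>?S. cluster_assign T i) = (\<Sum>T\<in>?S. 2 * (if ?c \<in> T then 1 else 0) - 1)"
    by (rule sum.cong) (use ca_eq[OF assms(1) _ assms(2)] in auto)
  also have "\<dots> = 2 * (\<Sum>T\<in>?S. if ?c \<in> T then 1 else 0) - real (card ?S)"
    by (simp add: sum_subtractf sum_distrib_left)
  also have "\<dots> = 2 * real (card {T. T \<subseteq> C \<and> card T = KT \<and> ?c \<in> T}) - real (K choose KT)"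
    by (subst sum_ind[OF fS]) (simp add: cS conj_assoc)
  also have "\<dots> = real (K choose KT) * (2 * real KT / real K - 1)"
  proof -
    have "real (card {T. T \<subseteq> C \<and> card T = KT \<and> ?c \<in> T}) = real (K choose KT) * (real KT / real K)"
      using q1[OF B(1,2) _ assms(3,4), of ?c] B(4)[OF assms(2)] assms by (simp add: field_simps)
    then show ?thesis by (simp add: algebra_simps)
  qed
  finally show ?thesis .
qed

lemma s2:
  assumes "balanced_partition N K C" "i < N" "j < N" "0 < KT" "KT \<le> K"
  shows "(\<Sum>T\<in>{T. T \<subseteq> C \<and> card T = KT}. cluster_assign T i * cluster_assign T j)
      = real (K choose KT) * (if j \<in> cluster_of C i then 1 else
          4 * (real KT * (real KT - 1) / (real K * (real K - 1))) - 4 * (real KT / real K) + 1)"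
proof -
  note B = bp_basic[OF assms(1)]
  let ?S = "{T. T \<subseteq> C \<and> card T = KT}"
  let ?c = "cluster_of C i"
  let ?d = "cluster_of C j"
  have fS: "finite ?S" using B(1) by simp
  have cS: "card ?S = K choose KT" using B(1,2) n_subsets by blast
  show ?thesis
  proof (cases "j \<in> ?c")
    case True
    then have "?d = ?c" using B(4,5) assms by blast
    then have "(\<Sum>T\<in>?S. cluster_assign T i * cluster_assign T j) = (\<Sum>T\<in>?S. 1)"
      by (intro sum.cong) (use ca_eq[OF assms(1) _ assms(2)] ca_eq[OF assms(1) _ assms(3)] in auto)
    then show ?thesis using True cS by simp
  next
    case False
    then have ne: "?c \<noteq> ?d" using B(4) assms by metis
    have "(\<Sum>T\<in>?S. cluster_assign T i * cluster_assign T j) =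
       (\<Sum>T\<in>?S. 4 * (if ?c \<in> T \<and> ?d \<in> T then 1 else 0) - 2 * (if ?c \<in> T then 1 else 0)
          - 2 * (if ?d \<in> T then 1 else 0) + 1)"
      by (intro sum.cong) (use ca_eq[OF assms(1) _ assms(2)] ca_eq[OF assms(1) _ assms(3)] in auto)
    also have "\<dots> = 4 * (\<Sum>T\<in>?S. if ?c \<in> T \<and> ?d \<in> T then 1 else 0) - 2 * (\<Sum>T\<in>?S. if ?c \<in> T then 1 else 0)
          - 2 * (\<Sum>T\<in>?S. if ?d \<in> T then 1 else 0) + real (card ?S)"
      by (simp add: sum_subtractf sum.distrib sum_distrib_left)
    also have "\<dots> = 4 * real (card {T. T \<subseteq> C \<and> card T = KT \<and> ?c \<in> T \<and> ?d \<in> T})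
        - 2 * real (card {T. T \<subseteq> C \<and> card T = KT \<and> ?c \<in> T})
        - 2 * real (card {T. T \<subseteq> C \<and> card T = KT \<and> ?d \<in> T}) + real (K choose KT)"
      by (simp only: sum_ind[OF fS] cS) (simp add: conj_assoc)
    also have "\<dots> = real (K choose KT) * (4 * (real KT * (real KT - 1) / (real K * (real K - 1))) - 4 * (real KT / real K) + 1)"
    proof -
      have pos: "real (K choose KT) \<noteq> 0" using assms by simp
      have a: "real (card {T. T \<subseteq> C \<and> card T = KT \<and> ?c \<in> T}) = real (K choose KT) * (real KT / real K)"
        using q1[OF B(1,2) _ assms(4,5), of ?c] B(4)[OF assms(2)] pos by (simp add: field_simps)
      have b: "real (card {T. T \<subseteq> C \<and> card T = KT \<and> ?d \<in> T}) = real (K choose KT) * (real KT / real K)"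
        using q1[OF B(1,2) _ assms(4,5), of ?d] B(4)[OF assms(3)] pos by (simp add: field_simps)
      have c: "real (card {T. T \<subseteq> C \<and> card T = KT \<and> ?c \<in> T \<and> ?d \<in> T}) = real (K choose KT) * (real KT * (real KT - 1) / (real K * (real K - 1)))"
        using q2[OF B(1,2) _ _ ne assms(4,5)] B(4)[OF assms(2)] B(4)[OF assms(3)] pos
        by (simp add: divide_eq_eq mult.commute)
      show ?thesis unfolding a b c by (simp add: algebra_simps)
    qed
    finally show ?thesis using False by simp
  qed
qed


lemma alg:
  fixes N K KT a b \<mu> \<rho> NT NC :: real
  assumes "N > 0" "K \<ge> 2" "0 < KT" "KT < K"
  and "NT = N * KT / K"
  and "NC = N - NT"
  and "a = 1 / (2 * NT) - 1 / (2 * NC)"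
  and "b = 1 / (2 * NT) + 1 / (2 * NC)"
  and "\<mu> = 2 * KT / K - 1"
  and "\<rho> = 4 * (KT * (KT - 1) / (K * (K - 1))) - 4 * (KT / K) + 1"
  shows "a + b * \<mu> = 0" "b + a * \<mu> = 2 / N" "b * (1 - \<rho>) = 2 / N * (K / (K - 1))"
proof -
  have K1: "K - 1 \<noteq> 0" "K - KT \<noteq> 0" "K \<noteq> 0" "N \<noteq> 0" "KT \<noteq> 0" using assms by auto
  have x: "1 / (2 * NT) = K / (2 * N * KT)" using assms K1 by simp
  have NC': "NC = N * (K - KT) / K" unfolding assms(6) assms(5) using K1 by (simp add: field_simps)
  have y: "1 / (2 * NC) = K / (2 * N * (K - KT))" using NC' K1 by simp
  have a: "a = K * (K - 2 * KT) / (2 * N * KT * (K - KT))" unfolding assms(7) x y using K1 by (simp add: field_simps; simp add: algebra_simps)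
  have b: "b = K * K / (2 * N * KT * (K - KT))" unfolding assms(8) x y using K1 by (simp add: field_simps; simp add: algebra_simps)
  have mu: "\<mu> = (2 * KT - K) / K" unfolding assms(9) using K1 by (simp add: field_simps)
  have rho: "1 - \<rho> = 4 * KT * (K - KT) / (K * (K - 1))" unfolding assms(10) using K1 by (simp add: field_simps; simp add: algebra_simps)
  have "a + b * \<mu> = (K * (K - 2 * KT) + K * K * ((2 * KT - K) / K)) / (2 * N * KT * (K - KT))"
    unfolding a b mu by (simp add: add_divide_distrib)
  also have "K * K * ((2 * KT - K) / K) = K * (2 * KT - K)" using K1 by simp
  finally show "a + b * \<mu> = 0" by (simp add: algebra_simps)
  have Pm: "K * (K - 2 * KT) * ((2 * KT - K) / K) = - ((K - 2 * KT) * (K - 2 * KT))" using K1 by (simp add: field_simps; simp add: algebra_simps)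
  have "b + a * \<mu> = (K * K + K * (K - 2 * KT) * ((2 * KT - K) / K)) / (2 * N * KT * (K - KT))"
    unfolding a b mu by (simp add: add_divide_distrib)
  also have "\<dots> = (K * K - (K - 2 * KT) * (K - 2 * KT)) / (2 * N * KT * (K - KT))" unfolding Pm by simp
  also have "K * K - (K - 2 * KT) * (K - 2 * KT) = 2 * KT * (2 * (K - KT))" by (simp add: algebra_simps)
  also have "2 * KT * (2 * (K - KT)) / (2 * N * KT * (K - KT)) = 2 / N" using K1 by (simp add: field_simps)
  finally show "b + a * \<mu> = 2 / N" .
  define E where "E = KT * (K - KT)"
  have E: "E \<noteq> 0" using K1 by (simp add: E_def)
  have b': "b = K * K / (2 * N) * (1 / E)" unfolding b E_def by (simp add: ac_simps)
  have r': "1 - \<rho> = E * (4 / (K * (K - 1)))" unfolding rho E_def by (simp add: ac_simps)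
  have "b * (1 - \<rho>) = K * K / (2 * N) * (4 / (K * (K - 1))) * (E * (1 / E))"
    unfolding b' r' by (simp add: ac_simps)
  also have "\<dots> = K * K / (2 * N) * (4 / (K * (K - 1)))" using E by simp
  also have "\<dots> = 2 / N * (K / (K - 1))" using K1 by (simp add: field_simps)
  finally show "b * (1 - \<rho>) = 2 / N * (K / (K - 1))" .
qed


definition Amat :: "(nat \<Rightarrow> nat \<Rightarrow> real) \<Rightarrow> nat \<Rightarrow> nat \<Rightarrow> nat \<Rightarrow> nat \<Rightarrow> real" where
  "Amat w N M i j = (\<Sum>s<M. (w i s / (\<Sum>s'<M. w i s')) * (w j s / (\<Sum>k<N. w k s)))"

lemma aux1: fixes x :: real shows "(x * ((\<Sum>j\<in>J. f j * g j) / V)) / W = (\<Sum>j\<in>J. (x / W) * (f j / V) * g j)"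
proof -
  have "(\<Sum>j\<in>J. (x / W) * (f j / V) * g j) = (\<Sum>j\<in>J. (x / W / V) * (f j * g j))"
    by (intro sum.cong refl) (simp add: divide_inverse algebra_simps)
  also have "\<dots> = (x / W / V) * (\<Sum>j\<in>J. f j * g j)" by (simp add: sum_distrib_left)
  finally show ?thesis by simp
qed

lemma aux2: fixes c :: real shows "(\<Sum>j\<in>J. c * (f j / V)) = c * ((\<Sum>j\<in>J. f j) / V)"
  by (simp only: sum_divide_distrib sum_distrib_left)

lemma exp_lin: "exposure w N M i Z = (\<Sum>j<N. Amat w N M i j * Z j)"
proof -
  have "exposure w N M i Z = (\<Sum>s<M. (w i s * ((\<Sum>j<N. w j s * Z j) / (\<Sum>k<N. w k s))) / (\<Sum>s'<M. w i s'))"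
    unfolding exposure_def dose_def by (simp add: sum_divide_distrib)
  also have "\<dots> = (\<Sum>s<M. \<Sum>j<N. (w i s / (\<Sum>s'<M. w i s')) * (w j s / (\<Sum>k<N. w k s)) * Z j)"
    by (simp only: aux1)
  also have "\<dots> = (\<Sum>j<N. \<Sum>s<M. (w i s / (\<Sum>s'<M. w i s')) * (w j s / (\<Sum>k<N. w k s)) * Z j)"
    by (rule sum.swap)
  also have "\<dots> = (\<Sum>j<N. Amat w N M i j * Z j)"
    unfolding Amat_def by (simp add: sum_distrib_right)
  finally show ?thesis .
qed

lemma Amat_sum:
  assumes "i < N" "\<forall>i<N. (\<Sum>s<M. w i s) > 0" "\<forall>s<M. (\<Sum>i<N. w i s) > 0"
  shows "(\<Sum>j<N. Amat w N M i j) = 1"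
proof -
  have "(\<Sum>j<N. Amat w N M i j) = (\<Sum>s<M. \<Sum>j<N. (w i s / (\<Sum>s'<M. w i s')) * (w j s / (\<Sum>k<N. w k s)))"
    unfolding Amat_def by (rule sum.swap)
  also have "\<dots> = (\<Sum>s<M. (w i s / (\<Sum>s'<M. w i s')) * ((\<Sum>j<N. w j s) / (\<Sum>k<N. w k s)))"
    by (simp only: aux2)
  also have "\<dots> = (\<Sum>s<M. w i s / (\<Sum>s'<M. w i s'))"
  proof (intro sum.cong refl)
    fix s assume "s \<in> {..<M}"
    then have "(\<Sum>k<N. w k s) \<noteq> 0" using assms(3) by force
    then show "w i s / (\<Sum>s'<M. w i s') * ((\<Sum>j<N. w j s) / (\<Sum>k<N. w k s)) = w i s / (\<Sum>s'<M. w i s')" by simp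
  qed
  also have "\<dots> = 1"
  proof -
    have "(\<Sum>s<M. w i s) > 0" using assms(1,2) by blast
    then show ?thesis by (simp add: sum_divide_distrib[symmetric])
  qed
  finally show ?thesis .
qed

lemma att_eq:
  assumes "\<forall>i<N. (\<Sum>s<M. w i s) > 0" "\<forall>s<M. (\<Sum>i<N. w i s) > 0"
  shows "att N (lin_outcome w N M \<alpha> \<beta> \<gamma>) = (1 / real N) * (\<Sum>i<N. 2 * \<beta> i + 2 * \<gamma> i)"
  unfolding att_def
proof (intro arg_cong[where f="\<lambda>x. 1 / real N * x"] sum.cong refl)
  fix i assume "i \<in> {..<N}"
  then have s: "(\<Sum>j<N. Amat w N M i j) = 1" using Amat_sum assms by blast
  have e1: "exposure w N M i (\<lambda>_. 1) = 1" using s by (simp add: exp_lin)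
  have e2: "exposure w N M i (\<lambda>_. -1) = -1" using s by (simp add: exp_lin sum_negf)
  show "lin_outcome w N M \<alpha> \<beta> \<gamma> i (\<lambda>_. 1) - lin_outcome w N M \<alpha> \<beta> \<gamma> i (\<lambda>_. - 1) = 2 * \<beta> i + 2 * \<gamma> i"
    unfolding lin_outcome_def e1 e2 by simp
qed

lemma aux3:
  fixes p q y z :: real
  assumes "z = 1 \<or> z = -1"
  shows "1 / p * (if z = 1 then y else 0) - 1 / q * (if z = - 1 then y else 0)
       = y * (1 / (2 * p) - 1 / (2 * q) + (1 / (2 * p) + 1 / (2 * q)) * z)"
proof -
  have h: "1 / (2 * p) = (1 / p) / 2" "1 / (2 * q) = (1 / q) / 2" by simp_all
  show ?thesis unfolding h using assms by (elim disjE) (simp_all add: algebra_simps)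
qed

lemma dim_decomp:
  assumes "\<forall>i<N. Z i = 1 \<or> Z i = -1"
  shows "dim_estimator N K KT Y Z = (\<Sum>i<N. Y i Z *
      ((1 / (2 * (real N * real KT / real K)) - 1 / (2 * (real N - real N * real KT / real K)))
     + (1 / (2 * (real N * real KT / real K)) + 1 / (2 * (real N - real N * real KT / real K))) * Z i))"
proof -
  have e1: "{i. i < N \<and> Z i = 1} = {i\<in>{..<N}. Z i = 1}" "{i. i < N \<and> Z i = -1} = {i\<in>{..<N}. Z i = -1}" by auto
  show ?thesis
    unfolding dim_estimator_def Let_def e1 sum.inter_filter[OF finite_lessThan] sum_distrib_left sum_subtractf[symmetric]
  proof (intro sum.cong refl)
    fix i assume "i \<in> {..<N}"
    then have "Z i = 1 \<or> Z i = -1" using assms by blast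
    then show "1 / (real N * real KT / real K) * (if Z i = 1 then Y i Z else 0) -
         1 / (real N - real N * real KT / real K) * (if Z i = - 1 then Y i Z else 0) =
         Y i Z * (1 / (2 * (real N * real KT / real K)) - 1 / (2 * (real N - real N * real KT / real K)) +
         (1 / (2 * (real N * real KT / real K)) + 1 / (2 * (real N - real N * real KT / real K))) * Z i)"
      by (rule aux3)
  qed
qed

lemma sum_expand:
  fixes z :: "'t \<Rightarrow> nat \<Rightarrow> real"
  assumes "finite S"
  shows "(\<Sum>T\<in>S. (al + be * z T i + ga * (\<Sum>j<N. A j * z T j)) * (a + b * z T i))
    = al * a * real (card S) + (al * b + be * a) * (\<Sum>T\<in>S. z T i) + be * b * (\<Sum>T\<in>S. z T i * z T i)
      + ga * (\<Sum>j<N. A j * (a * (\<Sum>T\<in>S. z T j) + b * (\<Sum>T\<in>S. z T i * z T j)))"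
proof -
  have "(\<Sum>T\<in>S. (al + be * z T i + ga * (\<Sum>j<N. A j * z T j)) * (a + b * z T i))
    = (\<Sum>T\<in>S. al * a + (al * b + be * a) * z T i + be * b * (z T i * z T i)
      + ga * (\<Sum>j<N. A j * (a * z T j + b * (z T i * z T j))))"
  proof (intro sum.cong refl)
    fix T
    have "(\<Sum>j<N. A j * z T j) * (a + b * z T i) = (\<Sum>j<N. A j * z T j * (a + b * z T i))"
      by (simp add: sum_distrib_right)
    also have "\<dots> = (\<Sum>j<N. A j * (a * z T j + b * (z T i * z T j)))"
      by (intro sum.cong refl) (simp add: algebra_simps)
    finally have "(\<Sum>j<N. A j * z T j) * (a + b * z T i) = (\<Sum>j<N. A j * (a * z T j + b * (z T i * z T j)))" .
    then show "(al + be * z T i + ga * (\<Sum>j<N. A j * z T j)) * (a + b * z T i) =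
      al * a + (al * b + be * a) * z T i + be * b * (z T i * z T i) + ga * (\<Sum>j<N. A j * (a * z T j + b * (z T i * z T j)))"
      by (simp add: algebra_simps)
  qed
  also have "\<dots> = al * a * real (card S) + (al * b + be * a) * (\<Sum>T\<in>S. z T i) + be * b * (\<Sum>T\<in>S. z T i * z T i)
      + ga * (\<Sum>T\<in>S. \<Sum>j<N. A j * (a * z T j + b * (z T i * z T j)))"
    by (simp add: sum.distrib sum_distrib_left)
  also have "(\<Sum>T\<in>S. \<Sum>j<N. A j * (a * z T j + b * (z T i * z T j))) = (\<Sum>j<N. \<Sum>T\<in>S. A j * (a * z T j + b * (z T i * z T j)))"
    by (rule sum.swap)
  also have "\<dots> = (\<Sum>j<N. A j * (a * (\<Sum>T\<in>S. z T j) + b * (\<Sum>T\<in>S. z T i * z T j)))"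
    by (intro sum.cong refl) (simp add: sum.distrib sum_distrib_left distrib_left mult.assoc)
  finally show ?thesis .
qed



lemma part1:
  fixes N M K KT :: nat and w :: "nat \<Rightarrow> nat \<Rightarrow> real" and \<alpha> \<beta> \<gamma> :: "nat \<Rightarrow> real"
  assumes "K \<ge> 2" "0 < KT" "KT < K"
    and W: "\<forall>i<N. (\<Sum>s<M. w i s) > 0"
    and V: "\<forall>s<M. (\<Sum>i<N. w i s) > 0"
    and BP: "balanced_partition N K C"
  shows "att N (lin_outcome w N M \<alpha> \<beta> \<gamma>)
              - measure_pmf.expectation (cluster_design C KT)
                  (dim_estimator N K KT (lin_outcome w N M \<alpha> \<beta> \<gamma>))
            = 2 / real N * (real K / (real K - 1)) *
              (\<Sum>i<N. \<Sum>j\<in>{..<N} - cluster_of C i. \<gamma> i * (\<Sum>s<M.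
                  (w i s / (\<Sum>s'<M. w i s')) * (w j s / (\<Sum>k<N. w k s))))"
proof -
  note B = bp_basic[OF BP]
  have N0: "N > 0"
  proof -
    have "C \<noteq> {}" using B(2) assms(1) by auto
    then obtain c where c: "c \<in> C" by blast
    have "c \<noteq> {}" using c partition_onD3 BP unfolding balanced_partition_def by metis
    then show ?thesis using B(3)[OF c] by auto
  qed
  define S where "S = {T. T \<subseteq> C \<and> card T = KT}"
  define n where "n = real (K choose KT)"
  have fS: "finite S" using B(1) by (simp add: S_def)
  have cS: "card S = K choose KT" using B(1,2) n_subsets unfolding S_def by blast
  have n0: "n \<noteq> 0" using assms by (simp add: n_def)
  have Sne: "S \<noteq> {}" using cS assms by auto
  have E: "\<And>f. measure_pmf.expectation (cluster_design C KT) f = (\<Sum>T\<in>S. f (cluster_assign T)) / n"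
    unfolding cluster_design_def n_def cS[symmetric] S_def[symmetric]
    using integral_pmf_of_set[OF Sne fS] by simp
  define NT where "NT = real N * real KT / real K"
  define NC where "NC = real N - NT"
  define a where "a = 1 / (2 * NT) - 1 / (2 * NC)"
  define b where "b = 1 / (2 * NT) + 1 / (2 * NC)"
  define \<mu> where "\<mu> = 2 * real KT / real K - 1"
  define \<rho> where "\<rho> = 4 * (real KT * (real KT - 1) / (real K * (real K - 1))) - 4 * (real KT / real K) + 1"
  have alg: "a + b * \<mu> = 0" "b + a * \<mu> = 2 / real N" "b * (1 - \<rho>) = 2 / real N * (real K / (real K - 1))"
    using alg[of "real N" "real K" "real KT" NT NC a b \<mu> \<rho>] N0 assms(1,2,3)
    unfolding NT_def NC_def a_def b_def \<mu>_def \<rho>_def by auto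
  define A where "A = Amat w N M"
  define z where "z = (\<lambda>T i. cluster_assign T i)"
  define r where "r = (\<lambda>i j. if j \<in> cluster_of C i then 1 else \<rho>)"
  have pm: "\<And>T. T \<in> S \<Longrightarrow> \<forall>i<N. z T i = 1 \<or> z T i = -1"
    unfolding z_def S_def using ca_eq[OF BP] by auto
  have s1: "\<And>i. i < N \<Longrightarrow> (\<Sum>T\<in>S. z T i) = n * \<mu>"
    unfolding z_def S_def n_def \<mu>_def using s1[OF BP _ assms(2)] assms(3) by simp
  have s2: "\<And>i j. i < N \<Longrightarrow> j < N \<Longrightarrow> (\<Sum>T\<in>S. z T i * z T j) = n * r i j"
    unfolding z_def S_def n_def r_def \<rho>_def using s2[OF BP _ _ assms(2)] assms(3) by simp
  have rii: "\<And>i. i < N \<Longrightarrow> r i i = 1" unfolding r_def using B(4) by simp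
  have dimT: "\<And>T. T \<in> S \<Longrightarrow> dim_estimator N K KT (lin_outcome w N M \<alpha> \<beta> \<gamma>) (cluster_assign T)
      = (\<Sum>i<N. (\<alpha> i + \<beta> i * z T i + \<gamma> i * (\<Sum>j<N. A i j * z T j)) * (a + b * z T i))"
  proof -
    fix T assume "T \<in> S"
    then show "?thesis T"
      using dim_decomp[of N "cluster_assign T" K KT "lin_outcome w N M \<alpha> \<beta> \<gamma>"] pm[of T]
      unfolding lin_outcome_def exp_lin z_def A_def a_def b_def NT_def NC_def by simp
  qed
  have "measure_pmf.expectation (cluster_design C KT) (dim_estimator N K KT (lin_outcome w N M \<alpha> \<beta> \<gamma>))
     = (\<Sum>T\<in>S. \<Sum>i<N. (\<alpha> i + \<beta> i * z T i + \<gamma> i * (\<Sum>j<N. A i j * z T j)) * (a + b * z T i)) / n"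
    unfolding E using dimT by simp
  also have "\<dots> = (\<Sum>i<N. (\<Sum>T\<in>S. (\<alpha> i + \<beta> i * z T i + \<gamma> i * (\<Sum>j<N. A i j * z T j)) * (a + b * z T i)) / n)"
    by (subst sum.swap) (simp add: sum_divide_distrib)
  also have "\<dots> = (\<Sum>i<N. \<alpha> i * (a + b * \<mu>) + \<beta> i * (b + a * \<mu>) + \<gamma> i * (\<Sum>j<N. A i j * (a * \<mu> + b * r i j)))"
  proof (intro sum.cong refl)
    fix i assume i: "i \<in> {..<N}"
    have "(\<Sum>j<N. A i j * (a * (\<Sum>T\<in>S. z T j) + b * (\<Sum>T\<in>S. z T i * z T j)))
        = (\<Sum>j<N. n * (A i j * (a * \<mu> + b * r i j)))"
    proof (intro sum.cong refl)
      fix j assume j: "j \<in> {..<N}"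
      have "(\<Sum>T\<in>S. z T j) = n * \<mu>" "(\<Sum>T\<in>S. z T i * z T j) = n * r i j" using i j s1 s2 by auto
      then show "A i j * (a * (\<Sum>T\<in>S. z T j) + b * (\<Sum>T\<in>S. z T i * z T j)) = n * (A i j * (a * \<mu> + b * r i j))"
        by (simp add: algebra_simps)
    qed
    also have "\<dots> = n * (\<Sum>j<N. A i j * (a * \<mu> + b * r i j))" by (simp add: sum_distrib_left)
    finally have sj: "(\<Sum>j<N. A i j * (a * (\<Sum>T\<in>S. z T j) + b * (\<Sum>T\<in>S. z T i * z T j)))
        = n * (\<Sum>j<N. A i j * (a * \<mu> + b * r i j))" .
    show "(\<Sum>T\<in>S. (\<alpha> i + \<beta> i * z T i + \<gamma> i * (\<Sum>j<N. A i j * z T j)) * (a + b * z T i)) / n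
        = \<alpha> i * (a + b * \<mu>) + \<beta> i * (b + a * \<mu>) + \<gamma> i * (\<Sum>j<N. A i j * (a * \<mu> + b * r i j))"
      unfolding sum_expand[OF fS] sj using i s1 s2[of i i] rii[of i] n0 cS n_def
      by (simp add: field_simps)
  qed
  finally have EQ: "measure_pmf.expectation (cluster_design C KT) (dim_estimator N K KT (lin_outcome w N M \<alpha> \<beta> \<gamma>))
     = (\<Sum>i<N. \<alpha> i * (a + b * \<mu>) + \<beta> i * (b + a * \<mu>) + \<gamma> i * (\<Sum>j<N. A i j * (a * \<mu> + b * r i j)))" .
  have hj: "\<And>i. i < N \<Longrightarrow> (\<Sum>j<N. A i j * (a * \<mu> + b * r i j)) = 2 / real N - b * (1 - \<rho>) * (\<Sum>j\<in>{..<N} - cluster_of C i. A i j)"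
  proof -
    fix i assume i: "i < N"
    have "(\<Sum>j<N. A i j * (a * \<mu> + b * r i j)) = (\<Sum>j<N. A i j * (a * \<mu> + b) - b * (1 - \<rho>) * (if j \<notin> cluster_of C i then A i j else 0))"
      by (intro sum.cong refl) (simp add: r_def algebra_simps)
    also have "\<dots> = (a * \<mu> + b) * (\<Sum>j<N. A i j) - b * (1 - \<rho>) * (\<Sum>j\<in>{..<N} - cluster_of C i. A i j)"
    proof -
      have "(\<Sum>j<N. (if j \<notin> cluster_of C i then A i j else 0)) = (\<Sum>j\<in>{..<N} - cluster_of C i. A i j)"
        by (simp add: sum.inter_filter[symmetric] set_diff_eq)
      moreover have "(\<Sum>j<N. A i j * (a * \<mu> + b) - (b * (1 - \<rho>)) * (if j \<notin> cluster_of C i then A i j else 0))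
          = (\<Sum>j<N. A i j * (a * \<mu> + b)) - (b * (1 - \<rho>)) * (\<Sum>j<N. (if j \<notin> cluster_of C i then A i j else 0))"
        by (simp only: sum_subtractf sum_distrib_left)
      moreover have "(\<Sum>j<N. A i j * (a * \<mu> + b)) = (a * \<mu> + b) * (\<Sum>j<N. A i j)"
        by (subst mult.commute) (rule sum_distrib_right[symmetric])
      ultimately show ?thesis by simp
    qed
    also have "(\<Sum>j<N. A i j) = 1" unfolding A_def using Amat_sum[OF i W V] .
    finally show "?thesis i" using alg(2) by (simp add: algebra_simps)
  qed
  have "att N (lin_outcome w N M \<alpha> \<beta> \<gamma>) - measure_pmf.expectation (cluster_design C KT)
                  (dim_estimator N K KT (lin_outcome w N M \<alpha> \<beta> \<gamma>))
      = (\<Sum>i<N. (2 * \<beta> i + 2 * \<gamma> i) / real N - (\<alpha> i * (a + b * \<mu>) + \<beta> i * (b + a * \<mu>) + \<gamma> i * (\<Sum>j<N. A i j * (a * \<mu> + b * r i j))))"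
    unfolding EQ att_eq[OF W V] by (simp add: sum_subtractf sum_distrib_left sum_divide_distrib)
  also have "\<dots> = (\<Sum>i<N. 2 / real N * (real K / (real K - 1)) * (\<gamma> i * (\<Sum>j\<in>{..<N} - cluster_of C i. A i j)))"
  proof (intro sum.cong refl)
    fix i assume "i \<in> {..<N}"
    then have i: "i < N" by simp
    define c where "c = 2 / real N * (real K / (real K - 1))"
    define h where "h = (\<Sum>j\<in>{..<N} - cluster_of C i. A i j)"
    have "(2 * \<beta> i + 2 * \<gamma> i) / real N - (\<alpha> i * (a + b * \<mu>) + \<beta> i * (b + a * \<mu>) + \<gamma> i * (\<Sum>j<N. A i j * (a * \<mu> + b * r i j)))
        = (2 * \<beta> i + 2 * \<gamma> i) / real N - (\<alpha> i * 0 + \<beta> i * (2 / real N) + \<gamma> i * (2 / real N - c * h))"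
      unfolding hj[OF i] alg c_def h_def by simp
    also have "\<dots> = c * (\<gamma> i * h)" by (simp add: algebra_simps add_divide_distrib)
    finally show "(2 * \<beta> i + 2 * \<gamma> i) / real N - (\<alpha> i * (a + b * \<mu>) + \<beta> i * (b + a * \<mu>) + \<gamma> i * (\<Sum>j<N. A i j * (a * \<mu> + b * r i j)))
        = 2 / real N * (real K / (real K - 1)) * (\<gamma> i * (\<Sum>j\<in>{..<N} - cluster_of C i. A i j))"
      unfolding c_def h_def .
  qed
  also have "\<dots> = 2 / real N * (real K / (real K - 1)) *
              (\<Sum>i<N. \<Sum>j\<in>{..<N} - cluster_of C i. \<gamma> i * (\<Sum>s<M.
                  (w i s / (\<Sum>s'<M. w i s')) * (w j s / (\<Sum>k<N. w k s))))"
    unfolding A_def Amat_def by (simp add: sum_distrib_left)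
  finally show ?thesis .
qed



lemma bp_N0: assumes "balanced_partition N K C" "K \<ge> 2" shows "N > 0"
proof -
  note B = bp_basic[OF assms(1)]
  have "C \<noteq> {}" using B(2) assms(2) by auto
  then obtain c where c: "c \<in> C" by blast
  have "c \<noteq> {}" using c partition_onD3 assms(1) unfolding balanced_partition_def by metis
  then show ?thesis using B(3)[OF c] by auto
qed

lemma part2:
  fixes N M K KT :: nat and w :: "nat \<Rightarrow> nat \<Rightarrow> real" and \<alpha> \<beta> :: "nat \<Rightarrow> real"
  assumes "K \<ge> 2" "0 < KT" "KT < K"
    and P: "\<forall>i<N. \<forall>s<M. w i s \<ge> 0"
    and W: "\<forall>i<N. (\<Sum>s<M. w i s) > 0"
    and V: "\<forall>s<M. (\<Sum>i<N. w i s) > 0"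
    and BP: "balanced_partition N K C"
    and G: "\<Gamma>0 \<le> \<Gamma>1"
  shows "(SUP \<gamma>\<in>{\<gamma>. \<forall>i<N. \<Gamma>0 \<le> \<gamma> i \<and> \<gamma> i \<le> \<Gamma>1}.
                         \<bar>att N (lin_outcome w N M \<alpha> \<beta> \<gamma>)
                           - measure_pmf.expectation (cluster_design C KT)
                               (dim_estimator N K KT (lin_outcome w N M \<alpha> \<beta> \<gamma>))\<bar>)
         = (2 / real N * (real K / (real K - 1))) * max \<bar>\<Gamma>0\<bar> \<bar>\<Gamma>1\<bar> * H_obj w N M C"
proof -
  define c where "c = 2 / real N * (real K / (real K - 1))"
  define m where "m = max \<bar>\<Gamma>0\<bar> \<bar>\<Gamma>1\<bar>"
  define h where "h = (\<lambda>i. \<Sum>j\<in>{..<N} - cluster_of C i. Amat w N M i j)"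
  define X where "X = {\<gamma>. \<forall>i<N. \<Gamma>0 \<le> \<gamma> i \<and> \<gamma> i \<le> \<Gamma>1}"
  have N0: "N > 0" using bp_N0 BP assms(1) by blast
  have c0: "c > 0" unfolding c_def using N0 assms(1) by simp
  have H: "H_obj w N M C = (\<Sum>i<N. h i)" unfolding H_obj_def h_def Amat_def ..
  have h0: "\<And>i. i < N \<Longrightarrow> h i \<ge> 0"
  proof -
    fix i assume i: "i < N"
    show "h i \<ge> 0" unfolding h_def Amat_def
    proof (intro sum_nonneg)
      fix j s assume j: "j \<in> {..<N} - cluster_of C i" and s: "s \<in> {..<M}"
      have "w i s \<ge> 0" "w j s \<ge> 0" "(\<Sum>s'<M. w i s') \<ge> 0" "(\<Sum>k<N. w k s) \<ge> 0"
        using P W V i j s by (auto intro: less_imp_le)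
      then show "w i s / (\<Sum>s'<M. w i s') * (w j s / (\<Sum>k<N. w k s)) \<ge> 0" by simp
    qed
  qed
  have expr: "\<And>\<gamma>. \<bar>att N (lin_outcome w N M \<alpha> \<beta> \<gamma>)
                           - measure_pmf.expectation (cluster_design C KT)
                               (dim_estimator N K KT (lin_outcome w N M \<alpha> \<beta> \<gamma>))\<bar> = c * \<bar>\<Sum>i<N. \<gamma> i * h i\<bar>"
  proof -
    fix \<gamma> :: "nat \<Rightarrow> real"
    have "(\<Sum>i<N. \<Sum>j\<in>{..<N} - cluster_of C i. \<gamma> i * (\<Sum>s<M.
                  (w i s / (\<Sum>s'<M. w i s')) * (w j s / (\<Sum>k<N. w k s)))) = (\<Sum>i<N. \<gamma> i * h i)"
      unfolding h_def Amat_def by (simp add: sum_distrib_left)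
    then have eq: "att N (lin_outcome w N M \<alpha> \<beta> \<gamma>)
                           - measure_pmf.expectation (cluster_design C KT)
                               (dim_estimator N K KT (lin_outcome w N M \<alpha> \<beta> \<gamma>)) = c * (\<Sum>i<N. \<gamma> i * h i)"
      using part1[OF assms(1,2,3) W V BP, of \<alpha> \<beta> \<gamma>] unfolding c_def by simp
    show "?thesis \<gamma>" unfolding eq abs_mult using c0 by simp
  qed
  have bound: "\<And>\<gamma>. \<gamma> \<in> X \<Longrightarrow> c * \<bar>\<Sum>i<N. \<gamma> i * h i\<bar> \<le> c * m * H_obj w N M C"
  proof -
    fix \<gamma> assume g: "\<gamma> \<in> X"
    have "\<bar>\<Sum>i<N. \<gamma> i * h i\<bar> \<le> (\<Sum>i<N. \<bar>\<gamma> i * h i\<bar>)" by (rule sum_abs)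
    also have "\<dots> \<le> (\<Sum>i<N. m * h i)"
    proof (intro sum_mono)
      fix i assume "i \<in> {..<N}"
      then have i: "i < N" by simp
      have "\<bar>\<gamma> i\<bar> \<le> m" using g i unfolding X_def m_def by auto
      then show "\<bar>\<gamma> i * h i\<bar> \<le> m * h i" using h0[OF i] by (simp add: abs_mult mult_right_mono)
    qed
    also have "\<dots> = m * H_obj w N M C" unfolding H by (simp add: sum_distrib_left)
    finally show "c * \<bar>\<Sum>i<N. \<gamma> i * h i\<bar> \<le> c * m * H_obj w N M C" using c0 by (simp add: mult.assoc)
  qed
  define g0 where "g0 = (\<lambda>_::nat. if \<bar>\<Gamma>0\<bar> \<le> \<bar>\<Gamma>1\<bar> then \<Gamma>1 else \<Gamma>0)"
  have g0X: "g0 \<in> X" unfolding X_def g0_def using G by auto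
  have g0v: "c * \<bar>\<Sum>i<N. g0 i * h i\<bar> = c * m * H_obj w N M C"
  proof -
    have "(\<Sum>i<N. g0 i * h i) = g0 0 * H_obj w N M C" unfolding H g0_def by (simp add: sum_distrib_left)
    moreover have "\<bar>g0 0\<bar> = m" unfolding g0_def m_def by auto
    moreover have "H_obj w N M C \<ge> 0" unfolding H using h0 by (intro sum_nonneg) simp
    ultimately show ?thesis by (simp add: abs_mult)
  qed
  have "(SUP \<gamma>\<in>X. c * \<bar>\<Sum>i<N. \<gamma> i * h i\<bar>) = c * m * H_obj w N M C"
    by (rule cSup_eq_maximum) (use g0X g0v bound in \<open>force+\<close>)
  then show ?thesis unfolding expr X_def c_def m_def by simp
qed

theorem lemma1:
  fixes N M K KT :: nat and w :: "nat \<Rightarrow> nat \<Rightarrow> real" and \<alpha> \<beta> :: "nat \<Rightarrow> real"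
  assumes "K \<ge> 2" and "K dvd N" and "0 < KT" and "KT < K"
    and "\<forall>i<N. \<forall>s<M. w i s \<ge> 0"
    and "\<forall>i<N. (\<Sum>s<M. w i s) > 0"
    and "\<forall>s<M. (\<Sum>i<N. w i s) > 0"
  shows "(\<forall>C \<gamma>. balanced_partition N K C \<longrightarrow>
            att N (lin_outcome w N M \<alpha> \<beta> \<gamma>)
              - measure_pmf.expectation (cluster_design C KT)
                  (dim_estimator N K KT (lin_outcome w N M \<alpha> \<beta> \<gamma>))
            = 2 / real N * (real K / (real K - 1)) *
              (\<Sum>i<N. \<Sum>j\<in>{..<N} - cluster_of C i. \<gamma> i * (\<Sum>s<M.
                  (w i s / (\<Sum>s'<M. w i s')) * (w j s / (\<Sum>k<N. w k s))))) \<and>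
         (\<forall>\<Gamma>0 \<Gamma>1 :: real. \<Gamma>0 \<le> \<Gamma>1 \<and> \<not> (\<Gamma>0 = 0 \<and> \<Gamma>1 = 0) \<longrightarrow>
            (let F = (\<lambda>C. SUP \<gamma>\<in>{\<gamma>. \<forall>i<N. \<Gamma>0 \<le> \<gamma> i \<and> \<gamma> i \<le> \<Gamma>1}.
                         \<bar>att N (lin_outcome w N M \<alpha> \<beta> \<gamma>)
                           - measure_pmf.expectation (cluster_design C KT)
                               (dim_estimator N K KT (lin_outcome w N M \<alpha> \<beta> \<gamma>))\<bar>)
             in {C. balanced_partition N K C \<and>
                    (\<forall>C'. balanced_partition N K C' \<longrightarrow> F C \<le> F C')}
              = {C. balanced_partition N K C \<and>
                    (\<forall>C'. balanced_partition N K C' \<longrightarrow> H_obj w N M C \<le> H_obj w N M C')}))"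
proof (intro conjI allI impI)
  fix C \<gamma> assume "balanced_partition N K C"
  then show "att N (lin_outcome w N M \<alpha> \<beta> \<gamma>)
              - measure_pmf.expectation (cluster_design C KT)
                  (dim_estimator N K KT (lin_outcome w N M \<alpha> \<beta> \<gamma>))
            = 2 / real N * (real K / (real K - 1)) *
              (\<Sum>i<N. \<Sum>j\<in>{..<N} - cluster_of C i. \<gamma> i * (\<Sum>s<M.
                  (w i s / (\<Sum>s'<M. w i s')) * (w j s / (\<Sum>k<N. w k s))))"
    using part1[OF assms(1,3,4,6,7)] by blast
next
  fix \<Gamma>0 \<Gamma>1 :: real assume G: "\<Gamma>0 \<le> \<Gamma>1 \<and> \<not> (\<Gamma>0 = 0 \<and> \<Gamma>1 = 0)"
  define F where "F = (\<lambda>C. SUP \<gamma>\<in>{\<gamma>. \<forall>i<N. \<Gamma>0 \<le> \<gamma> i \<and> \<gamma> i \<le> \<Gamma>1}.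
                         \<bar>att N (lin_outcome w N M \<alpha> \<beta> \<gamma>)
                           - measure_pmf.expectation (cluster_design C KT)
                               (dim_estimator N K KT (lin_outcome w N M \<alpha> \<beta> \<gamma>))\<bar>)"
  define k where "k = (2 / real N * (real K / (real K - 1))) * max \<bar>\<Gamma>0\<bar> \<bar>\<Gamma>1\<bar>"
  have FH: "\<And>C. balanced_partition N K C \<Longrightarrow> F C = k * H_obj w N M C"
    unfolding F_def k_def using part2[OF assms(1,3,4,5,6,7) _ conjunct1[OF G]] by simp
  have k0: "\<And>C. balanced_partition N K C \<Longrightarrow> k > 0"
  proof -
    fix C assume "balanced_partition N K C"
    then have "N > 0" using bp_N0 assms(1) by blast
    moreover have "max \<bar>\<Gamma>0\<bar> \<bar>\<Gamma>1\<bar> > 0" using G by auto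
    ultimately show "k > 0" unfolding k_def using assms(1) by simp
  qed
  have "{C. balanced_partition N K C \<and> (\<forall>C'. balanced_partition N K C' \<longrightarrow> F C \<le> F C')}
      = {C. balanced_partition N K C \<and> (\<forall>C'. balanced_partition N K C' \<longrightarrow> H_obj w N M C \<le> H_obj w N M C')}"
  proof (intro Collect_cong conj_cong refl)
    fix C assume C: "balanced_partition N K C"
    show "(\<forall>C'. balanced_partition N K C' \<longrightarrow> F C \<le> F C') = (\<forall>C'. balanced_partition N K C' \<longrightarrow> H_obj w N M C \<le> H_obj w N M C')"
      using FH k0[OF C] C by (auto simp: mult_le_cancel_left_pos)
  qed
  then show "let F = F in {C. balanced_partition N K C \<and> (\<forall>C'. balanced_partition N K C' \<longrightarrow> F C \<le> F C')}
      = {C. balanced_partition N K C \<and> (\<forall>C'. balanced_partition N K C' \<longrightarrow> H_obj w N M C \<le> H_obj w N M C')}"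
    by simp
qed

end
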